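(* Let $n\ge 2$ and let $\mathsf{T}$ be a string of length $n$ over $\{\mathtt{a},\mathtt{b}\}$ ($\mathtt{a}<\mathtt{b}$) whose suffix array $P=\mathsf{SA}_{\mathsf{T}}=[p_1,\ldots,p_n]$ is an arithmetically progressed permutation with ratio $k$ and $p_1=1$. Let $m$ be the number of occurrences of $\mathtt{a}$ in $\mathsf{T}$ and let $\mathsf{T}'=\mathsf{T}[2..n]\mathsf{T}[1]$. Then $\mathsf{SA}_{\mathsf{T}'}[i]=p_i-1\bmod n$ for all $i$, and this sequence equals the $m$-th cyclic rotation of $P$, i.e. $\mathsf{SA}_{\mathsf{T}'}[i]=P[(i+m)\bmod n]$ for all $i\in[1..n]$; in particular $\mathsf{SA}_{\mathsf{T}'}[1]=n$ and $\mathsf{SA}_{\mathsf{T}'}$ is arithmetically progressed with ratio $k$. Moreover $\mathsf{BWT}_{\mathsf{T}}=\mathsf{BWT}_{\mathsf{T}'}$.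
   Context: Lexicographic order with a proper prefix smaller than the longer string; suffix array $\mathsf{SA}_{\mathsf{T}}$: permutation of $[1..n]$ such that $\mathsf{T}[\mathsf{SA}_{\mathsf{T}}[i]..n]$ is the $i$-th smallest suffix. $x\bmod n$ denotes the representative of $x$ modulo $n$ in $[1..n]$. An arithmetically progressed permutation of length $n$ with ratio $k\in[1..n-1]$ is a permutation $P=[p_1,\ldots,p_n]$ of $[1..n]$ with $p_{i+1}=p_i+k\bmod n$. BWT: $\mathsf{BWT}_{\mathsf{T}}[i]=\mathsf{T}[\mathsf{SA}_{\mathsf{T}}[i]-1\bmod n]$. *)

theory Defs
  imports Main
begin

text \<open>Strings over the binary alphabet {a,b} are lists of naturals with entries in {0,1},
  where 0 encodes a and 1 encodes b (so a < b). Positions are 1-based in the paper;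
  position i of a list xs is xs ! (i - 1).\<close>

definition at :: "'a list \<Rightarrow> nat \<Rightarrow> 'a" where
  "at xs i = xs ! (i - 1)"

definition modn :: "int \<Rightarrow> nat \<Rightarrow> nat" where
  "modn x n = nat ((x - 1) mod int n) + 1"

definition lex_less :: "nat list \<Rightarrow> nat list \<Rightarrow> bool" where
  "lex_less xs ys \<longleftrightarrow> (xs, ys) \<in> lexord {(x, y). x < y}"

definition suffix_at :: "nat list \<Rightarrow> nat \<Rightarrow> nat list" where
  "suffix_at T i = drop (i - 1) T"

definition is_permutation_1n :: "nat list \<Rightarrow> nat \<Rightarrow> bool" where
  "is_permutation_1n P n \<longleftrightarrow> length P = n \<and> distinct P \<and> set P = {1..n}"

definition is_suffix_array :: "nat list \<Rightarrow> nat list \<Rightarrow> bool" where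
  "is_suffix_array T SA \<longleftrightarrow> is_permutation_1n SA (length T) \<and>
     (\<forall>i j. 1 \<le> i \<and> i < j \<and> j \<le> length T \<longrightarrow>
        lex_less (suffix_at T (at SA i)) (suffix_at T (at SA j)))"

definition suffix_array :: "nat list \<Rightarrow> nat list" where
  "suffix_array T = (THE SA. is_suffix_array T SA)"

definition arith_prog :: "nat list \<Rightarrow> nat \<Rightarrow> bool" where
  "arith_prog P k \<longleftrightarrow> (let n = length P in
     is_permutation_1n P n \<and> 1 \<le> k \<and> k \<le> n - 1 \<and>
     (\<forall>i. 1 \<le> i \<and> i < n \<longrightarrow> at P (i + 1) = modn (int (at P i) + int k) n))"

definition bwt :: "nat list \<Rightarrow> nat list" where
  "bwt T = map (\<lambda>p. at T (modn (int p - 1) (length T))) (suffix_array T)"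

end

theory Submission
  imports Defs "HOL-Library.List_Lexorder" "HOL-Library.Multiset"
begin

lemma lex_less_iff: "lex_less xs ys \<longleftrightarrow> xs < ys"
  by (simp add: lex_less_def list_less_def)

lemma suffix_inj: "inj_on (suffix_at T) {1..length T}"
proof (rule inj_onI)
  fix x y assume "x \<in> {1..length T}" "y \<in> {1..length T}" "suffix_at T x = suffix_at T y"
  then have "length (suffix_at T x) = length (suffix_at T y)" by simp
  with \<open>x \<in> _\<close> \<open>y \<in> _\<close> show "x = y" by (auto simp: suffix_at_def)
qed

lemma sa_sorted:
  assumes "is_suffix_array T SA"
  shows "sorted_wrt (<) (map (suffix_at T) SA)"
proof -
  have len: "length SA = length T" using assms by (simp add: is_suffix_array_def is_permutation_1n_def)
  show ?thesis
  proof (subst sorted_wrt_iff_nth_less, intro allI impI)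
    fix i j assume "i < j" "j < length (map (suffix_at T) SA)"
    then have "lex_less (suffix_at T (at SA (i+1))) (suffix_at T (at SA (j+1)))"
      using assms len unfolding is_suffix_array_def by auto
    then show "map (suffix_at T) SA ! i < map (suffix_at T) SA ! j"
      using \<open>i < j\<close> \<open>j < _\<close> by (simp add: lex_less_iff at_def)
  qed
qed

lemma sa_unique:
  assumes "is_suffix_array T A" "is_suffix_array T B"
  shows "A = B"
proof (rule map_sorted_distinct_set_unique[where f="suffix_at T"])
  have sA: "set A = {1..length T}" and sB: "set B = {1..length T}"
    using assms by (auto simp: is_suffix_array_def is_permutation_1n_def)
  show "inj_on (suffix_at T) (set A \<union> set B)" using sA sB suffix_inj by simp
  show "sorted (map (suffix_at T) A)" "distinct (map (suffix_at T) A)"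
    using sa_sorted[OF assms(1)] strict_sorted_iff by blast+
  show "sorted (map (suffix_at T) B)" "distinct (map (suffix_at T) B)"
    using sa_sorted[OF assms(2)] strict_sorted_iff by blast+
  show "set A = set B" using sA sB by simp
qed

lemma sa_exists_gen: "\<exists>S. is_suffix_array T S"
proof -
  define S where "S = sort_key (suffix_at T) [1..<length T + 1]"
  have set: "set S = {1..length T}" unfolding S_def by auto
  have d: "distinct S" unfolding S_def by simp
  have "length [1..<length T + 1] = length T" by (simp only: length_upt)
  then have len: "length S = length T" unfolding S_def by (simp only: length_sort)
  have "distinct (map (suffix_at T) S)"
    using d set suffix_inj by (simp add: distinct_map)
  moreover have "sorted (map (suffix_at T) S)" unfolding S_def by (rule sorted_sort_key)
  ultimately have sw: "sorted_wrt (<) (map (suffix_at T) S)"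
    using strict_sorted_iff by blast
  have "is_suffix_array T S"
    unfolding is_suffix_array_def is_permutation_1n_def
  proof (intro conjI allI impI)
    fix i j assume a: "1 \<le> i \<and> i < j \<and> j \<le> length T"
    then have "map (suffix_at T) S ! (i-1) < map (suffix_at T) S ! (j-1)"
      using sw len by (subst (asm) sorted_wrt_iff_nth_less) auto
    moreover have "i - 1 < length S" "j - 1 < length S" using a len by auto
    ultimately show "lex_less (suffix_at T (at S i)) (suffix_at T (at S j))"
      by (simp add: lex_less_iff at_def)
  qed (use set d len in auto)
  then show ?thesis by blast
qed

lemma sa_is: "is_suffix_array T (suffix_array T)"
proof -
  obtain S where hS: "is_suffix_array T S" using sa_exists_gen by blast
  show ?thesis
    unfolding suffix_array_def by (rule theI[of _ S]) (use hS sa_unique in blast)+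
qed

lemma sa_eq: "is_suffix_array T SA \<Longrightarrow> suffix_array T = SA"
  using sa_is sa_unique by blast


lemma modn_range: "n > 0 \<Longrightarrow> 1 \<le> modn x n \<and> modn x n \<le> n"
proof -
  assume n: "n > 0"
  have "0 \<le> (x-1) mod int n" "(x-1) mod int n < int n" using n by simp_all
  then show ?thesis unfolding modn_def by linarith
qed

lemma modn_mod: "n > 0 \<Longrightarrow> int (modn x n) mod int n = x mod int n"
proof -
  assume n: "n > 0"
  have "int (modn x n) = (x - 1) mod int n + 1" unfolding modn_def using n by simp
  also have "\<dots> mod int n = (x - 1 + 1) mod int n" by (rule mod_add_left_eq)
  finally show ?thesis by simp
qed

lemma modn_cong: "x mod int n = y mod int n \<Longrightarrow> modn x n = modn y n"
proof -
  assume h: "x mod int n = y mod int n"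
  have "(x - 1) mod int n = (y - 1) mod int n" by (rule mod_diff_cong[OF h refl])
  then show ?thesis unfolding modn_def by simp
qed

lemma modn_id: "1 \<le> x \<Longrightarrow> x \<le> int n \<Longrightarrow> modn x n = nat x"
proof -
  assume "1 \<le> x" "x \<le> int n"
  then have "(x - 1) mod int n = x - 1" by (intro mod_pos_pos_trivial) auto
  then show ?thesis unfolding modn_def using \<open>1 \<le> x\<close> by simp
qed

lemma modn_0: "n > 0 \<Longrightarrow> modn 0 n = n"
proof -
  assume "n > 0"
  then have "(0 - 1) mod int n = int n - 1" using zmod_minus1[of "int n"] by simp
  then show ?thesis unfolding modn_def using \<open>n > 0\<close> by simp
qed

lemma app0: "(xs::nat list) < ys \<Longrightarrow> xs @ [0] < ys @ [0]"
proof (induction xs arbitrary: ys)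
  case Nil
  then obtain b ys' where "ys = b # ys'" by (cases ys) auto
  then show ?case by (cases "b = 0"; cases ys') auto
next
  case (Cons a xs)
  then obtain b ys' where ys: "ys = b # ys'" by (cases ys) auto
  show ?case using Cons ys by auto
qed

theorem lemma8:
  fixes T :: "nat list" and n k :: nat
  assumes "n \<ge> 2" and "length T = n" and "set T \<subseteq> {0, 1}"
    and "arith_prog (suffix_array T) k"
    and "at (suffix_array T) 1 = 1"
  shows "let P = suffix_array T; m = count_list T 0; T' = drop 1 T @ [T ! 0];
             S = suffix_array T' in
           (\<forall>i\<in>{1..n}. at S i = modn (int (at P i) - 1) n) \<and>
           (\<forall>i\<in>{1..n}. at S i = at P (modn (int i + int m) n)) \<and>
           at S 1 = n \<and> arith_prog S k \<and>
           bwt T = bwt T'"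
proof -
  note n2 = assms(1) and lenT = assms(2) and setT = assms(3)
  have npos: "n > 0" using n2 by simp
  define P where "P = suffix_array T"
  define m where "m = count_list T 0"
  define T' where "T' = drop 1 T @ [T ! 0]"
  have saP: "is_suffix_array T P" using sa_is P_def by simp
  have lenP: "length P = n" and setP: "set P = {1..n}" and distP: "distinct P"
    using saP lenT by (auto simp: is_suffix_array_def is_permutation_1n_def)
  have ord: "\<And>i j. 1 \<le> i \<Longrightarrow> i < j \<Longrightarrow> j \<le> n \<Longrightarrow> suffix_at T (at P i) < suffix_at T (at P j)"
    using saP lenT by (auto simp: is_suffix_array_def lex_less_iff)
  have p1: "at P 1 = 1" using assms(5) P_def by simp
  have apP: "arith_prog P k" using assms(4) P_def by simp
  have Pin: "\<And>i. 1 \<le> i \<Longrightarrow> i \<le> n \<Longrightarrow> at P i \<in> {1..n}"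
  proof -
    fix i assume "1 \<le> i" "i \<le> n"
    then have "P ! (i-1) \<in> set P" using lenP by (intro nth_mem) simp
    then show "at P i \<in> {1..n}" using setP by (simp add: at_def)
  qed
  have Pinj: "\<And>i j. 1 \<le> i \<Longrightarrow> i \<le> n \<Longrightarrow> 1 \<le> j \<Longrightarrow> j \<le> n \<Longrightarrow> at P i = at P j \<Longrightarrow> i = j"
    using lenP distP unfolding at_def
    by (metis One_nat_def Suc_le_eq Suc_pred nth_eq_iff_index_eq)
  obtain jn where jn: "1 \<le> jn" "jn \<le> n" "at P jn = n"
  proof -
    have "n \<in> set P" using setP npos by simp
    then obtain i where "i < n" "P ! i = n" using lenP by (metis in_set_conv_nth)
    then show ?thesis using that[of "i+1"] by (simp add: at_def)
  qed
  have jn1: "jn > 1" using jn p1 n2 by (cases "jn = 1") auto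
  have vals: "\<And>q. q < n \<Longrightarrow> T ! q = 0 \<or> T ! q = 1"
    using setT lenT nth_mem by fastforce
  have suf: "\<And>q. 1 \<le> q \<Longrightarrow> q \<le> n \<Longrightarrow> suffix_at T q = T ! (q - 1) # drop q T"
    unfolding suffix_at_def using lenT by (metis Cons_nth_drop_Suc One_nat_def Suc_le_eq Suc_pred)
  have sufn: "suffix_at T n = [T ! (n - 1)]"
    using suf[of n] npos lenT by simp
  have suf1: "suffix_at T 1 = T ! 0 # drop 1 T" using suf[of 1] npos by simp
  have d1: "drop 1 T \<noteq> []" using lenT n2 by simp
  have less1n: "suffix_at T 1 < suffix_at T n" using ord[of 1 jn] jn jn1 p1 by simp
  have l2: "T ! 0 # drop 1 T < [T ! (n - 1)]" using less1n suf1 sufn by simp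
  then have l3: "T ! 0 < T ! (n - 1)" by simp
  have "T ! (n-1) = 0 \<or> T ! (n-1) = 1" using vals npos by simp
  then have Tn: "T ! (n - 1) = 1" and T0: "T ! 0 = 0" using l3 by auto
  have lt: "\<And>i. 1 \<le> i \<Longrightarrow> i \<le> n \<Longrightarrow> (at T (at P i) = 0 \<longleftrightarrow> i < jn)"
  proof -
    fix i assume i: "1 \<le> i" "i \<le> n"
    have pi: "at P i \<in> {1..n}" using Pin i by simp
    have si: "suffix_at T (at P i) = at T (at P i) # drop (at P i) T"
      using suf[of "at P i"] pi by (simp add: at_def)
    consider "i < jn" | "i = jn" | "jn < i" by linarith
    then show "at T (at P i) = 0 \<longleftrightarrow> i < jn"
    proof cases
      case 1
      then have "suffix_at T (at P i) < suffix_at T n" using ord[of i jn] i jn by simp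
      then have "at T (at P i) # drop (at P i) T < [1]" using si sufn Tn by simp
      then have "at T (at P i) < 1" by auto
      then show ?thesis using 1 by simp
    next
      case 2
      then show ?thesis using jn Tn by (simp add: at_def)
    next
      case 3
      then have "suffix_at T n < suffix_at T (at P i)" using ord[of jn i] i jn by simp
      then have "[1] < at T (at P i) # drop (at P i) T" using si sufn Tn by simp
      then have "at T (at P i) \<noteq> 0" by auto
      then show ?thesis using 3 by simp
    qed
  qed
  have mapT: "map (at T) [1..<n+1] = T"
    by (rule nth_equalityI) (auto simp del: upt_Suc simp add: lenT at_def nth_upt)
  have msetP: "mset P = mset [1..<n+1]"
  proof -
    have "set [1..<n+1] = {1..n}" by auto
    then show ?thesis using set_eq_iff_mset_eq_distinct[OF distP distinct_upt, of 1 "n+1"] setP by simp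
  qed
  have "m = count_list (map (at T) P) 0"
  proof -
    have "mset (map (at T) P) = image_mset (at T) (mset [1..<n+1])"
      by (simp only: mset_map msetP)
    also have "\<dots> = mset (map (at T) [1..<n+1])" by (simp only: mset_map)
    also have "\<dots> = mset T" by (simp only: mapT)
    finally have "mset (map (at T) P) = mset T" .
    then show ?thesis unfolding m_def by (simp only: count_mset[symmetric])
  qed
  also have "\<dots> = card {i. i < n \<and> at T (P ! i) = 0}"
  proof -
    have "{i. i < length (map (at T) P) \<and> 0 = map (at T) P ! i} = {i. i < n \<and> at T (P ! i) = 0}"
      using lenP by auto
    then show ?thesis by (simp only: count_list_eq_length_filter length_filter_conv_card)
  qed
  also have "{i. i < n \<and> at T (P ! i) = 0} = {..<jn-1}"
  proof -
    have "\<And>i. i < n \<Longrightarrow> (at T (P ! i) = 0) = (i + 1 < jn)"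
    proof -
      fix i assume "i < n"
      then show "(at T (P ! i) = 0) = (i + 1 < jn)" using lt[of "Suc i"] by (simp add: at_def)
    qed
    then show ?thesis using jn by auto
  qed
  finally have m_eq: "m = jn - 1" by simp
  have mjn: "m + 1 = jn" using m_eq jn1 by simp
  have apstep: "\<And>i. 1 \<le> i \<Longrightarrow> i < n \<Longrightarrow> at P (i+1) = modn (int (at P i) + int k) n"
    and k1: "1 \<le> k" and kn: "k \<le> n - 1"
    using apP lenP unfolding arith_prog_def Let_def by auto
  have closed: "\<And>i. i < n \<Longrightarrow> at P (i+1) = modn (1 + int i * int k) n"
  proof -
    fix i show "i < n \<Longrightarrow> at P (i+1) = modn (1 + int i * int k) n"
    proof (induction i)
      case 0 then show ?case using p1 modn_id[of 1 n] npos by simp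
    next
      case (Suc i)
      have step: "at P (Suc i + 1) = modn (int (at P (i+1)) + int k) n"
        using apstep[of "Suc i"] Suc.prems by simp
      have h: "int (at P (i+1)) mod int n = (1 + int i * int k) mod int n"
        using Suc modn_mod[OF npos] by simp
      have "(int (at P (i+1)) + int k) mod int n = (1 + int i * int k + int k) mod int n"
        by (rule mod_add_cong[OF h refl])
      also have "1 + int i * int k + int k = 1 + int (Suc i) * int k" by (simp add: algebra_simps)
      finally show ?case using step modn_cong by metis
    qed
  qed
  have mk: "(1 + int m * int k) mod int n = 0"
  proof -
    have "at P (m+1) = n" using mjn jn by simp
    then have "modn (1 + int m * int k) n = n" using closed[of m] mjn jn by simp
    then have "int n mod int n = (1 + int m * int k) mod int n"
      using modn_mod[OF npos, of "1 + int m * int k"] by simp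
    then show ?thesis by simp
  qed
  define f where "f p = modn (int p - 1) n" for p
  have fform: "\<And>p. 1 \<le> p \<Longrightarrow> p \<le> n \<Longrightarrow> f p = (if p = 1 then n else p - 1)"
  proof -
    fix p assume p: "1 \<le> p" "p \<le> n"
    show "f p = (if p = 1 then n else p - 1)"
    proof (cases "p = 1")
      case True then show ?thesis unfolding f_def using modn_0[OF npos] by simp
    next
      case False
      then have "modn (int p - 1) n = nat (int p - 1)" using p by (intro modn_id) auto
      then show ?thesis unfolding f_def using False p by simp
    qed
  qed
  have frange: "\<And>p. 1 \<le> p \<Longrightarrow> p \<le> n \<Longrightarrow> 1 \<le> f p \<and> f p \<le> n"
    using fform npos by fastforce
  have lenT': "length T' = n" unfolding T'_def using lenT npos by simp
  have T'0: "T' = drop 1 T @ [0]" unfolding T'_def using T0 by simp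
  have sufT': "\<And>p. 1 \<le> p \<Longrightarrow> p \<le> n \<Longrightarrow>
      suffix_at T' (f p) = (if p = 1 then [0] else suffix_at T p @ [0])"
  proof -
    fix p assume p: "1 \<le> p" "p \<le> n"
    show "suffix_at T' (f p) = (if p = 1 then [0] else suffix_at T p @ [0])"
    proof (cases "p = 1")
      case True
      then show ?thesis using fform[OF p] lenT npos unfolding suffix_at_def T'0 by simp
    next
      case False
      then have "f p = p - 1" using fform[OF p] by simp
      moreover have "1 + (p - 1 - 1) = p - 1" using False p by simp
      then have "drop (p - 1 - 1) (drop 1 T) = drop (p - 1) T" by (simp only: drop_drop add.commute)
      ultimately show ?thesis using False p lenT unfolding suffix_at_def T'0 by simp
    qed
  qed
  have atT': "\<And>q. 1 \<le> q \<Longrightarrow> q \<le> n \<Longrightarrow> at T' (f q) = at T q"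
  proof -
    fix q assume q: "1 \<le> q" "q \<le> n"
    show "at T' (f q) = at T q"
    proof (cases "q = 1")
      case True
      then show ?thesis using fform[OF q] lenT npos T0 unfolding at_def T'0
        by (simp add: nth_append)
    next
      case False
      then have "Suc (q - Suc (Suc 0)) = q - Suc 0" "q - Suc (Suc 0) < n - Suc 0" using q by auto
      then show ?thesis using False fform[OF q] lenT q unfolding at_def T'0
        by (simp add: nth_append)
    qed
  qed
  define S0 where "S0 = map f P"
  have lenS0: "length S0 = n" unfolding S0_def using lenP by simp
  have atS0: "\<And>i. 1 \<le> i \<Longrightarrow> i \<le> n \<Longrightarrow> at S0 i = f (at P i)"
    unfolding S0_def at_def using lenP by simp
  have isS0: "is_suffix_array T' S0"
    unfolding is_suffix_array_def is_permutation_1n_def lenT'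
  proof (intro conjI allI impI)
    show "length S0 = n" by (rule lenS0)
    have inj: "inj_on f {1..n}"
      by (rule inj_onI) (use fform npos in \<open>auto split: if_splits\<close>)
    then show "distinct S0" unfolding S0_def using distP setP by (simp add: distinct_map)
    have "f ` {1..n} = {1..n}"
    proof
      show "f ` {1..n} \<subseteq> {1..n}" using frange by auto
      show "{1..n} \<subseteq> f ` {1..n}"
      proof
        fix q assume q: "q \<in> {1..n}"
        show "q \<in> f ` {1..n}"
        proof (cases "q = n")
          case True then show ?thesis using fform[of 1] npos by (auto intro!: image_eqI[of _ _ 1])
        next
          case False then show ?thesis using fform[of "q+1"] q n2
            by (auto intro!: image_eqI[of _ _ "q+1"])
        qed
      qed
    qed
    then show "set S0 = {1..n}" unfolding S0_def using setP by simp
  next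
    fix i j assume a: "1 \<le> i \<and> i < j \<and> j \<le> n"
    have pj: "1 \<le> at P j" "at P j \<le> n" using Pin a by auto
    have pi: "1 \<le> at P i" "at P i \<le> n" using Pin a by auto
    have pj1: "at P j \<noteq> 1" using Pinj[of j 1] p1 a by auto
    show "lex_less (suffix_at T' (at S0 i)) (suffix_at T' (at S0 j))"
    proof (cases "i = 1")
      case True
      have "suffix_at T' (at S0 i) = [0]" using True sufT'[OF pi] atS0 a p1 by simp
      moreover have "suffix_at T' (at S0 j) = (at T (at P j) # drop (at P j) T) @ [0]"
        using sufT'[OF pj] pj1 atS0[of j] a suf[OF pj] by (simp add: at_def)
      ultimately show ?thesis unfolding lex_less_iff
        by (cases "at T (at P j) = 0"; cases "drop (at P j) T") auto
    next
      case False
      have pi1: "at P i \<noteq> 1" using Pinj[of i 1] p1 a False by auto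
      have "suffix_at T (at P i) < suffix_at T (at P j)" using ord a False by simp
      then have "suffix_at T (at P i) @ [0] < suffix_at T (at P j) @ [0]" by (rule app0)
      then show ?thesis unfolding lex_less_iff
        using sufT'[OF pi] sufT'[OF pj] pi1 pj1 atS0[of i] atS0[of j] a by simp
    qed
  qed
  have S: "suffix_array T' = S0" using sa_eq[OF isS0] .
  have G1: "\<forall>i\<in>{1..n}. at S0 i = modn (int (at P i) - 1) n"
    using atS0 f_def by simp
  have G2: "\<forall>i\<in>{1..n}. at S0 i = at P (modn (int i + int m) n)"
  proof
    fix i assume i: "i \<in> {1..n}"
    define r where "r = modn (int i + int m) n"
    have r: "1 \<le> r" "r \<le> n" using modn_range[OF npos] r_def by auto
    have Pr: "at P r = modn (1 + int (r - 1) * int k) n" using closed[of "r-1"] r by simp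
    have "i - 1 < n" using i by auto
    from closed[OF this] have Pi: "at P i = modn (1 + int (i - 1) * int k) n" using i by simp
    have e1: "(int (at P i) - 1) mod int n = (1 + int (i - 1) * int k - 1) mod int n"
      by (rule mod_diff_cong[OF _ refl]) (simp add: Pi modn_mod[OF npos])
    have "int r mod int n = (int i + int m) mod int n" unfolding r_def by (rule modn_mod[OF npos])
    then have "(int r - 1) mod int n = (int i + int m - 1) mod int n" by (rule mod_diff_cong[OF _ refl])
    then have "((int r - 1) * int k) mod int n = ((int i + int m - 1) * int k) mod int n"
      by (rule mod_mult_cong[OF _ refl])
    then have "(1 + (int r - 1) * int k) mod int n = (1 + (int i + int m - 1) * int k) mod int n"
      by (rule mod_add_cong[OF refl])
    also have "1 + (int i + int m - 1) * int k = (int i - 1) * int k + (1 + int m * int k)"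
      by (simp add: algebra_simps)
    also have "((int i - 1) * int k + (1 + int m * int k)) mod int n = ((int i - 1) * int k + 0) mod int n"
      by (rule mod_add_cong[OF refl]) (simp add: mk)
    finally have e2: "(1 + (int r - 1) * int k) mod int n = ((int i - 1) * int k) mod int n" by simp
    have "int (r - 1) = int r - 1" "int (i - 1) = int i - 1" using r i by auto
    then have "(int (at P i) - 1) mod int n = (1 + int (r - 1) * int k) mod int n"
      using e1 e2 by simp
    then have "modn (int (at P i) - 1) n = at P r" unfolding Pr by (rule modn_cong)
    then show "at S0 i = at P (modn (int i + int m) n)" using atS0 i f_def r_def by simp
  qed
  have G3: "at S0 1 = n" using atS0[of 1] npos p1 fform[of 1] by simp
  have G4: "arith_prog S0 k"
    unfolding arith_prog_def Let_def lenS0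
  proof (intro conjI allI impI)
    show "is_permutation_1n S0 n" using isS0 lenT' by (simp add: is_suffix_array_def)
    show "1 \<le> k" "k \<le> n - 1" using k1 kn by auto
  next
    fix i assume i: "1 \<le> i \<and> i < n"
    have a1: "at S0 (i+1) = modn (int (modn (int (at P i) + int k) n) - 1) n"
      using atS0[of "i+1"] apstep[of i] i f_def by simp
    have a2: "at S0 i = modn (int (at P i) - 1) n" using atS0[of i] i f_def by simp
    have "(int (modn (int (at P i) + int k) n) - 1) mod int n = (int (at P i) + int k - 1) mod int n"
      by (rule mod_diff_cong[OF modn_mod[OF npos] refl])
    moreover have "(int (modn (int (at P i) - 1) n) + int k) mod int n = (int (at P i) - 1 + int k) mod int n"
      by (rule mod_add_cong[OF modn_mod[OF npos] refl])
    ultimately have "(int (modn (int (at P i) + int k) n) - 1) mod int n = (int (at S0 i) + int k) mod int n"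
      using a2 by (simp add: algebra_simps)
    then show "at S0 (i + 1) = modn (int (at S0 i) + int k) n" using a1 modn_cong by metis
  qed
  have G5: "bwt T = bwt T'"
  proof -
    have "bwt T' = map (\<lambda>p. at T' (f (f p))) P"
      unfolding bwt_def S S0_def lenT' f_def by simp
    also have "\<dots> = map (\<lambda>p. at T (f p)) P"
    proof (rule map_cong[OF refl])
      fix p assume "p \<in> set P"
      then have p: "1 \<le> p" "p \<le> n" using setP by auto
      show "at T' (f (f p)) = at T (f p)" using atT' frange[OF p] by simp
    qed
    also have "\<dots> = bwt T" unfolding bwt_def P_def[symmetric] lenT f_def by simp
    finally show ?thesis by simp
  qed
  show ?thesis unfolding Let_def P_def[symmetric] m_def[symmetric] T'_def[symmetric] S
    using G1 G2 G3 G4 G5 by blast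
qed

end
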